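(* Let $\alpha \in [0,1)$ and $k \in \{0,\dots,m-1\}$, and let $\mathbf{S}_k = (S_k,\dots,S_k)$. For every monotone total order $T$ on $\Omega$, $$B_{T_h}^*(\mathbf{S}_k) \le B_T^*(\mathbf{S}_k) \le B_{T_\ell}^*(\mathbf{S}_k);$$ that is, among all pessimal bounds $B_T^*$ for monotone total orders $T$, the value at $\mathbf{S}_k$ is lowest for $T = T_h$ and highest for $T = T_\ell$.
   Context: Fix integers $m \ge 2$, $n \ge 1$ and reals $S_{\min} < S_{\max}$; $S = \{S_0,\dots,S_{m-1}\}$ with $S_k = S_{\min} + k\frac{S_{\max}-S_{\min}}{m-1}$. $\mathcal{F}$ is the set of probability distributions on $S$, identified with the probability simplex in $\mathbb{R}^m$ with the Euclidean topology; $E[F]$ is the mean. $\Omega$ is the set of samples of size $n$ from $S$, identified with their sorted versions $x_{(1)} \le \dots \le x_{(n)}$. $P_F[\Omega']$ is the probability that the sorted sample of $n$ i.i.d. draws from $F$ lies in $\Omega' \subseteq \Omega$; $\mathcal{G}(\Omega',\alpha) = \{F : P_F[\Omega'] > \alpha\}$ and $\mathcal{F}(\Omega',\alpha)$ is its closure. For a total order $T$ on $\Omega$, $\Omega(\mathbf{x},T) = \{\mathbf{y} : \mathbf{x} \le_T \mathbf{y}\}$ and the pessimal (conditionally optimal) bound is $B_T^*(\mathbf{x}) = \min\{E[F] : F \in \mathcal{F}(\Omega(\mathbf{x},T),\alpha)\}$ (standing assumption: the sets involved are nonempty). $\mathbf{x} \le \mathbf{y}$ means $x_{(j)} \le y_{(j)}$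 for all $j$; $T$ is monotone if $\mathbf{x} \le \mathbf{y}$ implies $\mathbf{x} \le_T \mathbf{y}$. $T_\ell$ (low lexicographic): $\mathbf{x} \le_{T_\ell} \mathbf{y}$ iff $\mathbf{x}=\mathbf{y}$ or at the smallest index $j$ with $x_{(j)} \ne y_{(j)}$ we have $x_{(j)} < y_{(j)}$. $T_h$ (high lexicographic): same with the largest such index. *)

theory Defs
  imports "HOL-Analysis.Analysis"
begin

definition Sval :: "nat \<Rightarrow> real \<Rightarrow> real \<Rightarrow> nat \<Rightarrow> real" where
  "Sval m Smin Smax k = Smin + real k * (Smax - Smin) / (real m - 1)"

definition Ssupp :: "nat \<Rightarrow> real \<Rightarrow> real \<Rightarrow> real set" where
  "Ssupp m Smin Smax = Sval m Smin Smax ` {..<m}"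

text \<open>Distributions on S: probability vectors (p 0, ..., p (m-1)), i.e. the simplex in R^m,
  embedded in nat => real (zero outside {..<m}) with the product topology, which on
  this set coincides with the Euclidean topology of R^m.\<close>
definition distrs :: "nat \<Rightarrow> (nat \<Rightarrow> real) set" where
  "distrs m = {p. (\<forall>i. 0 \<le> p i) \<and> (\<forall>i\<ge>m. p i = 0) \<and> (\<Sum>i<m. p i) = 1}"

definition mean :: "nat \<Rightarrow> real \<Rightarrow> real \<Rightarrow> (nat \<Rightarrow> real) \<Rightarrow> real" where
  "mean m Smin Smax p = (\<Sum>i<m. p i * Sval m Smin Smax i)"

text \<open>Samples of size n, identified with their sorted versions.\<close>
definition samples :: "nat \<Rightarrow> nat \<Rightarrow> real \<Rightarrow> real \<Rightarrow> real list set" where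
  "samples m n Smin Smax = {xs. length xs = n \<and> sorted xs \<and> set xs \<subseteq> Ssupp m Smin Smax}"

text \<open>Probability that the sorted sample of n i.i.d. draws from p lies in Om'.\<close>
definition probF :: "nat \<Rightarrow> nat \<Rightarrow> real \<Rightarrow> real \<Rightarrow> (nat \<Rightarrow> real) \<Rightarrow> real list set \<Rightarrow> real" where
  "probF m n Smin Smax p Om' =
     (\<Sum>ys \<in> {ys. set ys \<subseteq> {..<m} \<and> length ys = n}.
        if sort (map (Sval m Smin Smax) ys) \<in> Om' then prod_list (map p ys) else 0)"

definition Gset :: "nat \<Rightarrow> nat \<Rightarrow> real \<Rightarrow> real \<Rightarrow> real list set \<Rightarrow> real \<Rightarrow> (nat \<Rightarrow> real) set" where
  "Gset m n Smin Smax Om' \<alpha> = {p \<in> distrs m. probF m n Smin Smax p Om' > \<alpha>}"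

definition Fset :: "nat \<Rightarrow> nat \<Rightarrow> real \<Rightarrow> real \<Rightarrow> real list set \<Rightarrow> real \<Rightarrow> (nat \<Rightarrow> real) set" where
  "Fset m n Smin Smax Om' \<alpha> = closure (Gset m n Smin Smax Om' \<alpha>)"

definition upset :: "real list set \<Rightarrow> (real list \<times> real list) set \<Rightarrow> real list \<Rightarrow> real list set" where
  "upset Om T x = {y \<in> Om. (x, y) \<in> T}"

definition pess_bound :: "nat \<Rightarrow> nat \<Rightarrow> real \<Rightarrow> real \<Rightarrow> real \<Rightarrow> (real list \<times> real list) set \<Rightarrow> real list \<Rightarrow> real" where
  "pess_bound m n Smin Smax \<alpha> T x =
     Inf (mean m Smin Smax ` Fset m n Smin Smax (upset (samples m n Smin Smax) T x) \<alpha>)"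

definition monotone_order :: "real list set \<Rightarrow> (real list \<times> real list) set \<Rightarrow> bool" where
  "monotone_order Om T \<longleftrightarrow>
     (\<forall>x\<in>Om. \<forall>y\<in>Om. (\<forall>j<length x. x ! j \<le> y ! j) \<longrightarrow> (x, y) \<in> T)"

definition T_low :: "real list set \<Rightarrow> (real list \<times> real list) set" where
  "T_low Om = {(x, y). x \<in> Om \<and> y \<in> Om \<and>
     (x = y \<or> (\<exists>j<length x. (\<forall>i<j. x ! i = y ! i) \<and> x ! j < y ! j))}"

definition T_high :: "real list set \<Rightarrow> (real list \<times> real list) set" where
  "T_high Om = {(x, y). x \<in> Om \<and> y \<in> Om \<and>
     (x = y \<or> (\<exists>j<length x. (\<forall>i. j < i \<and> i < length x \<longrightarrow> x ! i = y ! i) \<and> x ! j < y ! j))}"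

end

theory Submission
  imports Defs
begin

lemma cont_mean: "continuous_on UNIV (mean m Smin Smax)"
  unfolding mean_def
  by (intro continuous_intros continuous_on_product_then_coordinatewise continuous_on_id)

lemma Sval_ge:
  assumes "m \<ge> 2" "Smin < Smax"
  shows "Smin \<le> Sval m Smin Smax i"
proof -
  have "real m - 1 > 0" using assms by simp
  moreover have "0 \<le> real i * (Smax - Smin)" using assms by simp
  ultimately show ?thesis unfolding Sval_def by simp
qed

lemma Sval_less:
  assumes "m \<ge> 2" "Smin < Smax" "i < j"
  shows "Sval m Smin Smax i < Sval m Smin Smax j"
proof -
  have "real m - 1 > 0" using assms by simp
  moreover have "real i * (Smax - Smin) < real j * (Smax - Smin)" using assms by simp
  ultimately show ?thesis unfolding Sval_def by (simp add: divide_strict_right_mono)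
qed

lemma mean_ge:
  assumes "m \<ge> 2" "Smin < Smax" "p \<in> distrs m"
  shows "Smin \<le> mean m Smin Smax p"
proof -
  have "Smin = (\<Sum>i<m. p i * Smin)" using assms(3) unfolding distrs_def
    by (simp add: sum_distrib_right[symmetric])
  also have "\<dots> \<le> mean m Smin Smax p" unfolding mean_def
    using assms(3) Sval_ge[OF assms(1,2)] unfolding distrs_def
    by (intro sum_mono mult_left_mono) auto
  finally show ?thesis .
qed

lemma Fset_bdd:
  assumes "m \<ge> 2" "Smin < Smax"
  shows "bdd_below (mean m Smin Smax ` Fset m n Smin Smax Om \<alpha>)"
proof -
  have "closed {p. Smin \<le> mean m Smin Smax p}"
    by (rule closed_Collect_le) (auto intro: cont_mean)
  moreover have "Gset m n Smin Smax Om \<alpha> \<subseteq> {p. Smin \<le> mean m Smin Smax p}"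
    using mean_ge[OF assms] unfolding Gset_def by auto
  ultimately have "Fset m n Smin Smax Om \<alpha> \<subseteq> {p. Smin \<le> mean m Smin Smax p}"
    unfolding Fset_def by (rule closure_minimal[rotated])
  then show ?thesis unfolding bdd_below_def by blast
qed

lemma probF_mono:
  assumes "p \<in> distrs m" "A \<subseteq> B"
  shows "probF m n Smin Smax p A \<le> probF m n Smin Smax p B"
  unfolding probF_def
  using assms by (intro sum_mono) (auto intro!: prod_list_nonneg simp: distrs_def)

lemma Fset_mono:
  assumes "A \<subseteq> B"
  shows "Fset m n Smin Smax A \<alpha> \<subseteq> Fset m n Smin Smax B \<alpha>"
  unfolding Fset_def
proof (rule closure_mono)
  show "Gset m n Smin Smax A \<alpha> \<subseteq> Gset m n Smin Smax B \<alpha>"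
    unfolding Gset_def using probF_mono[OF _ assms, of _ m n Smin Smax] by fastforce
qed

lemma Fset_ne:
  assumes "m \<ge> 2" "\<alpha> < 1" "replicate n (Sval m Smin Smax (m-1)) \<in> A"
  shows "Fset m n Smin Smax A \<alpha> \<noteq> {}"
proof -
  define p where "p = (\<lambda>i::nat. if i = m - 1 then (1::real) else 0)"
  have pd: "p \<in> distrs m" unfolding distrs_def p_def using assms(1)
    by (auto simp: sum.delta)
  define L where "L = {ys. set ys \<subseteq> {..<m} \<and> length ys = n}"
  define r where "r = replicate n (m - 1)"
  have rL: "r \<in> L" unfolding L_def r_def using assms(1) by auto
  have fin: "finite L" unfolding L_def by (rule finite_lists_length_eq) auto
  have "sort (map (Sval m Smin Smax) r) = replicate n (Sval m Smin Smax (m-1))"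
    unfolding r_def by (simp add: sorted_sort_id)
  then have t: "(if sort (map (Sval m Smin Smax) r) \<in> A then prod_list (map p r) else 0) = 1"
    using assms(3) unfolding r_def p_def by simp
  have "1 \<le> probF m n Smin Smax p A"
    unfolding probF_def L_def[symmetric]
    apply (subst t[symmetric])
    apply (rule member_le_sum[OF rL _ fin])
    using pd by (auto intro!: prod_list_nonneg simp: distrs_def)
  then have "p \<in> Gset m n Smin Smax A \<alpha>" unfolding Gset_def using pd assms(2) by auto
  then show ?thesis unfolding Fset_def using closure_subset by blast
qed

lemma inf_le:
  assumes "m \<ge> 2" "Smin < Smax" "\<alpha> < 1" "A \<subseteq> B"
    "replicate n (Sval m Smin Smax (m-1)) \<in> A"
  shows "Inf (mean m Smin Smax ` Fset m n Smin Smax B \<alpha>)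
       \<le> Inf (mean m Smin Smax ` Fset m n Smin Smax A \<alpha>)"
  apply (rule cInf_superset_mono)
  subgoal using Fset_ne[OF assms(1,3,5)] by blast
  subgoal by (rule Fset_bdd[OF assms(1,2)])
  subgoal using Fset_mono[OF assms(4), of m n Smin Smax \<alpha>] by (rule image_mono)
  done

theorem corollary1:
  fixes m n k :: nat and Smin Smax \<alpha> :: real and T :: "(real list \<times> real list) set"
  assumes "m \<ge> 2" and "n \<ge> 1" and "Smin < Smax"
    and "0 \<le> \<alpha>" and "\<alpha> < 1" and "k < m"
    and "linear_order_on (samples m n Smin Smax) T"
    and "monotone_order (samples m n Smin Smax) T"
  shows "pess_bound m n Smin Smax \<alpha> (T_high (samples m n Smin Smax))
             (replicate n (Sval m Smin Smax k))
           \<le> pess_bound m n Smin Smax \<alpha> T (replicate n (Sval m Smin Smax k))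
       \<and> pess_bound m n Smin Smax \<alpha> T (replicate n (Sval m Smin Smax k))
           \<le> pess_bound m n Smin Smax \<alpha> (T_low (samples m n Smin Smax))
             (replicate n (Sval m Smin Smax k))"
proof -
  define Om where "Om = samples m n Smin Smax"
  define s where "s = Sval m Smin Smax k"
  define x where "x = replicate n s"
  define top where "top = replicate n (Sval m Smin Smax (m-1))"
  have xOm: "x \<in> Om" unfolding x_def Om_def samples_def Ssupp_def s_def using assms(6) by auto
  have topOm: "top \<in> Om" unfolding top_def Om_def samples_def Ssupp_def using assms(1) by auto
  have ant: "antisym T" using assms(7) unfolding linear_order_on_def partial_order_on_def by blast
  have mono: "\<And>a b. a \<in> Om \<Longrightarrow> b \<in> Om \<Longrightarrow> (\<forall>j<length a. a ! j \<le> b ! j) \<Longrightarrow> (a, b) \<in> T"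
    using assms(8) unfolding monotone_order_def Om_def by blast
  have lenOm: "\<And>y. y \<in> Om \<Longrightarrow> length y = n \<and> sorted y"
    unfolding Om_def samples_def by auto
  have sub1: "upset Om (T_low Om) x \<subseteq> upset Om T x"
  proof
    fix y assume "y \<in> upset Om (T_low Om) x"
    then have yOm: "y \<in> Om" and h: "x = y \<or> (\<exists>j<length x. (\<forall>i<j. x ! i = y ! i) \<and> x ! j < y ! j)"
      unfolding upset_def T_low_def by auto
    have "\<forall>j<length x. x ! j \<le> y ! j"
      using h
    proof
      assume "x = y" then show ?thesis by simp
    next
      assume "\<exists>j<length x. (\<forall>i<j. x ! i = y ! i) \<and> x ! j < y ! j"
      then obtain j where j: "j < n" "\<forall>i<j. s = y ! i" "s < y ! j"
        unfolding x_def by auto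
      have srt: "sorted y" "length y = n" using lenOm[OF yOm] by auto
      show ?thesis
      proof (intro allI impI)
        fix i assume "i < length x"
        then have i: "i < n" unfolding x_def by simp
        show "x ! i \<le> y ! i"
        proof (cases "i < j")
          case True then show ?thesis using j i unfolding x_def by simp
        next
          case False
          then have "y ! j \<le> y ! i" using srt i by (simp add: sorted_nth_mono)
          then show ?thesis using j i unfolding x_def by simp
        qed
      qed
    qed
    then show "y \<in> upset Om T x" using mono[OF xOm yOm] yOm unfolding upset_def by auto
  qed
  have sub2: "upset Om T x \<subseteq> upset Om (T_high Om) x"
  proof
    fix y assume "y \<in> upset Om T x"
    then have yOm: "y \<in> Om" and xy: "(x, y) \<in> T" unfolding upset_def by auto
    have srt: "sorted y" "length y = n" using lenOm[OF yOm] by auto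
    have "x = y \<or> (\<exists>j<length x. (\<forall>i. j < i \<and> i < length x \<longrightarrow> x ! i = y ! i) \<and> x ! j < y ! j)"
    proof (cases "s < y ! (n - 1)")
      case True
      then show ?thesis using assms(2) unfolding x_def
        by (intro disjI2 exI[of _ "n - 1"]) auto
    next
      case False
      have "\<forall>j<length y. y ! j \<le> x ! j"
      proof (intro allI impI)
        fix j assume "j < length y"
        then have "y ! j \<le> y ! (n - 1)" using srt by (intro sorted_nth_mono) auto
        then show "y ! j \<le> x ! j" using False \<open>j < length y\<close> srt unfolding x_def by auto
      qed
      then have "(y, x) \<in> T" using mono[OF yOm xOm] by blast
      then show ?thesis using xy ant unfolding antisym_def by blast
    qed
    then show "y \<in> upset Om (T_high Om) x" using xOm yOm unfolding upset_def T_high_def by auto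
  qed
  have topin: "top \<in> upset Om (T_low Om) x"
  proof (cases "k = m - 1")
    case True
    then show ?thesis using topOm unfolding upset_def T_low_def x_def top_def s_def by auto
  next
    case False
    then have "s < Sval m Smin Smax (m-1)" unfolding s_def using assms(1,3,6)
      by (intro Sval_less) auto
    then have "\<exists>j<length x. (\<forall>i<j. x ! i = top ! i) \<and> x ! j < top ! j"
      using assms(2) unfolding x_def top_def by (intro exI[of _ 0]) auto
    then show ?thesis using topOm xOm unfolding upset_def T_low_def by auto
  qed
  show ?thesis
    unfolding pess_bound_def Om_def[symmetric] s_def[symmetric] x_def[symmetric]
  proof
    show "Inf (mean m Smin Smax ` Fset m n Smin Smax (upset Om (T_high Om) x) \<alpha>)
        \<le> Inf (mean m Smin Smax ` Fset m n Smin Smax (upset Om T x) \<alpha>)"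
      using sub1 sub2 topin unfolding top_def
      by (intro inf_le[OF assms(1,3,5)]) auto
    show "Inf (mean m Smin Smax ` Fset m n Smin Smax (upset Om T x) \<alpha>)
        \<le> Inf (mean m Smin Smax ` Fset m n Smin Smax (upset Om (T_low Om) x) \<alpha>)"
      using sub1 topin unfolding top_def
      by (intro inf_le[OF assms(1,3,5)]) auto
  qed
qed

end
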